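(* Consider a finite game in extensive form with perfect recall whose information sets are ordered by a precedence relation. For any initial profile $\bar\beta^1$ of full-support belief systems, the set of terminal histories reached by profiles of strong level-1 strategies coincides with the set of terminal histories reached by profiles of backward level-1 strategies: $Z(\bar L^1(\bar\beta^1))=Z(\vec L^1(\bar\beta^1))$.
   Context: Setting: a finite extensive-form game with finite player set $N$, possibly moves of nature (treated as a player with singleton information sets), finite horizon and perfect recall; information sets of all players are partially ordered by precedence ($I\preceq I'$ if $I$ precedes $I'$). $Z$ is the set of terminal histories, $u_i:Z\to\mathbb R$ player $i$'s utility, $\mathcal I_i$ player $i$'s information sets, $S_i$ her strategies (maps assigning an available action to each $I_i$), $S_{-i}$ the product of other players' and nature's strategy sets, $z(s)$ the terminal history reached by $s$. A profile $s_{-i}$ reaches $I_i$ if some $s_i$ makes $(s_i,s_{-i})$ reach $I_i$; $s_i$ reaches $I_i$ if some $s_{-i}$ makes $(s_i,s_{-i})$ reach $I_i$; $S_{-i}(I_i)$ is the set of $s_{-i}$ reaching $I_i$. For sets $X_j\subseteq S_j$, $Z(\times_{j\in N}X_j)=\{z(s):s_j\in X_j\ \forall j\in N,\ s_c\in S_c\}$. A belief system $\bar\beta_i$ gives for each $I_i$ a belief $\bar\beta_i(I_i)\in\Delta(S_{-i})$ with $\bar\beta_i(I_i)(S_{-i}(I_i))=1$, updated by conditioning whenever possible along preceding information sets; it is full-support if each $\bar\beta_i(I_i)$ gives positive probability to every element of $S_{-i}(I_i)$. $s_i'$ is an $I_i$-replacement of $s_i$ if it agrees with $s_i$ on information sets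 strictly preceding $I_i$. $s_i$ is rational at $I_i$ given $\bar\beta_i(I_i)$ if $s_i$ does not reach $I_i$ or no $I_i$-replacement of $s_i$ yields strictly higher expected utility with respect to $\bar\beta_i(I_i)$. Continuation strategy: $s_{i\mid I_i}$ is the restriction of $s_i$ to information sets $I'\in\mathcal I_i$ with $I_i\preceq I'$. $s_{i\mid I_i}$ is rational at $I_i$ given $\bar\beta_i(I_i)$ if a strategy that reaches $I_i$ and coincides with $s_i$ on information sets $I'$ with $I_i\preceq I'$ is rational at $I_i$ given $\bar\beta_i(I_i)$ (i.e., the continuation play from $I_i$ is optimal regardless of whether $s_i$ itself reaches $I_i$). Strong level-1: $\bar L_i^1(\bar\beta^1)=\{s_i: s_i\text{ is rational at every } I_i\in\mathcal I_i \text{ given } \bar\beta^1_i(I_i)\}$. Backward level-1: $\vec L_i^1(\bar\beta^1)=\{s_i: \text{for every } I_i\in\mathcal I_i,\ s_{i\mid I_i}\text{ is rational at } I_i\text{ given }\bar\beta_i^1(I_i)\}$. $\bar L^1=\times_{i\in N}\bar L^1_i$, $\vec L^1=\times_{i\in N}\vec L^1_i$. *)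

theory Defs
  imports "HOL-Probability.Probability_Mass_Function" "HOL-Library.Sublist" "HOL-Library.FuncSet"
begin

record ('p, 'a) efg =
  players :: "'p set"
  nature  :: 'p
  hist    :: "'a list set"
  turn    :: "'a list \<Rightarrow> 'p"
  infoset :: "'a list \<Rightarrow> 'a list set"

type_synonym ('p, 'a) strat = "'a list set \<Rightarrow> 'a"
type_synonym ('p, 'a) profile = "'p \<Rightarrow> ('p, 'a) strat"

definition agents :: "('p,'a) efg \<Rightarrow> 'p set" where
  "agents G = insert (nature G) (players G)"

definition nonterm_hist :: "('p,'a) efg \<Rightarrow> 'a list \<Rightarrow> bool" where
  "nonterm_hist G h \<longleftrightarrow> h \<in> hist G \<and> (\<exists>a. h @ [a] \<in> hist G)"

definition terminals :: "('p,'a) efg \<Rightarrow> 'a list set" where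
  "terminals G = {h \<in> hist G. \<not> (\<exists>a. h @ [a] \<in> hist G)}"

definition avail :: "('p,'a) efg \<Rightarrow> 'a list set \<Rightarrow> 'a set" where
  "avail G I = {a. \<exists>h\<in>I. h @ [a] \<in> hist G}"

definition infosets :: "('p,'a) efg \<Rightarrow> 'p \<Rightarrow> 'a list set set" where
  "infosets G i = {infoset G h | h. nonterm_hist G h \<and> turn G h = i}"

definition all_infosets :: "('p,'a) efg \<Rightarrow> 'a list set set" where
  "all_infosets G = (\<Union>i\<in>agents G. infosets G i)"

definition precedes :: "'a list set \<Rightarrow> 'a list set \<Rightarrow> bool" where
  "precedes I I' \<longleftrightarrow> (\<exists>h\<in>I. \<exists>h'\<in>I'. prefix h h')"

definition strictly_precedes :: "'a list set \<Rightarrow> 'a list set \<Rightarrow> bool" where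
  "strictly_precedes I I' \<longleftrightarrow> (\<exists>h\<in>I. \<exists>h'\<in>I'. strict_prefix h h')"

definition experience :: "('p,'a) efg \<Rightarrow> 'p \<Rightarrow> 'a list \<Rightarrow> ('a list set \<times> 'a) list" where
  "experience G i h =
     map (\<lambda>k. (infoset G (take k h), h ! k)) (filter (\<lambda>k. turn G (take k h) = i) [0..<length h])"

definition perfect_recall :: "('p,'a) efg \<Rightarrow> bool" where
  "perfect_recall G \<longleftrightarrow>
     (\<forall>i\<in>players G. \<forall>h. nonterm_hist G h \<and> turn G h = i \<longrightarrow>
        (\<forall>h'\<in>infoset G h. experience G i h' = experience G i h))"

definition wf_game :: "('p,'a) efg \<Rightarrow> bool" where
  "wf_game G \<longleftrightarrow>
     finite (players G) \<and> nature G \<notin> players G \<and>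
     finite (hist G) \<and> [] \<in> hist G \<and>
     (\<forall>h\<in>hist G. \<forall>h'. prefix h' h \<longrightarrow> h' \<in> hist G) \<and>
     (\<forall>h. nonterm_hist G h \<longrightarrow>
        turn G h \<in> agents G \<and> h \<in> infoset G h \<and>
        (\<forall>h'\<in>infoset G h. nonterm_hist G h' \<and> turn G h' = turn G h \<and>
            infoset G h' = infoset G h \<and>
            {a. h' @ [a] \<in> hist G} = {a. h @ [a] \<in> hist G}) \<and>
        (turn G h = nature G \<longrightarrow> infoset G h = {h})) \<and>
     perfect_recall G \<and>
     partial_order_on (all_infosets G)
       {(I, I'). I \<in> all_infosets G \<and> I' \<in> all_infosets G \<and> precedes I I'}"

definition strategies :: "('p,'a) efg \<Rightarrow> 'p \<Rightarrow> ('p,'a) strat set" where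
  "strategies G i = (\<Pi>\<^sub>E I\<in>infosets G i. avail G I)"

definition others :: "('p,'a) efg \<Rightarrow> 'p \<Rightarrow> ('p,'a) profile set" where
  "others G i = (\<Pi>\<^sub>E j\<in>agents G - {i}. strategies G j)"

definition consistent :: "('p,'a) efg \<Rightarrow> ('p,'a) profile \<Rightarrow> 'a list \<Rightarrow> bool" where
  "consistent G s h \<longleftrightarrow>
     (\<forall>k<length h. s (turn G (take k h)) (infoset G (take k h)) = h ! k)"

definition outcome :: "('p,'a) efg \<Rightarrow> ('p,'a) profile \<Rightarrow> 'a list" where
  "outcome G s = (THE z. z \<in> terminals G \<and> consistent G s z)"

definition reaches :: "('p,'a) efg \<Rightarrow> ('p,'a) profile \<Rightarrow> 'a list set \<Rightarrow> bool" where
  "reaches G s I \<longleftrightarrow> (\<exists>h\<in>I. prefix h (outcome G s))"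

definition others_reaching :: "('p,'a) efg \<Rightarrow> 'p \<Rightarrow> 'a list set \<Rightarrow> ('p,'a) profile set" where
  "others_reaching G i I =
     {sm \<in> others G i. \<exists>si\<in>strategies G i. reaches G (sm(i := si)) I}"

definition strat_reaches :: "('p,'a) efg \<Rightarrow> 'p \<Rightarrow> ('p,'a) strat \<Rightarrow> 'a list set \<Rightarrow> bool" where
  "strat_reaches G i si I \<longleftrightarrow> (\<exists>sm\<in>others G i. reaches G (sm(i := si)) I)"

definition belief_system ::
  "('p,'a) efg \<Rightarrow> 'p \<Rightarrow> ('a list set \<Rightarrow> ('p,'a) profile pmf) \<Rightarrow> bool" where
  "belief_system G i b \<longleftrightarrow>
     (\<forall>I\<in>infosets G i.
        set_pmf (b I) \<subseteq> others G i \<and>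
        measure_pmf.prob (b I) (others_reaching G i I) = 1 \<and>
        (\<forall>I'\<in>infosets G i. precedes I I' \<and> measure_pmf.prob (b I) (others_reaching G i I') > 0 \<longrightarrow>
           (\<forall>E. measure_pmf.prob (b I') E =
                 measure_pmf.prob (b I) (E \<inter> others_reaching G i I') /
                 measure_pmf.prob (b I) (others_reaching G i I'))))"

definition full_support ::
  "('p,'a) efg \<Rightarrow> 'p \<Rightarrow> ('a list set \<Rightarrow> ('p,'a) profile pmf) \<Rightarrow> bool" where
  "full_support G i b \<longleftrightarrow>
     (\<forall>I\<in>infosets G i. \<forall>sm\<in>others_reaching G i I. pmf (b I) sm > 0)"

definition exp_util ::
  "('p,'a) efg \<Rightarrow> ('p \<Rightarrow> 'a list \<Rightarrow> real) \<Rightarrow> 'p \<Rightarrow> ('p,'a) profile pmf \<Rightarrow> ('p,'a) strat \<Rightarrow> real" where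
  "exp_util G u i \<mu> si = measure_pmf.expectation \<mu> (\<lambda>sm. u i (outcome G (sm(i := si))))"

definition replacement ::
  "('p,'a) efg \<Rightarrow> 'p \<Rightarrow> 'a list set \<Rightarrow> ('p,'a) strat \<Rightarrow> ('p,'a) strat \<Rightarrow> bool" where
  "replacement G i I si ti \<longleftrightarrow>
     ti \<in> strategies G i \<and>
     (\<forall>I'\<in>infosets G i. strictly_precedes I' I \<longrightarrow> ti I' = si I')"

definition rational_at ::
  "('p,'a) efg \<Rightarrow> ('p \<Rightarrow> 'a list \<Rightarrow> real) \<Rightarrow> 'p \<Rightarrow> 'a list set \<Rightarrow> ('p,'a) profile pmf
     \<Rightarrow> ('p,'a) strat \<Rightarrow> bool" where
  "rational_at G u i I \<mu> si \<longleftrightarrow>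
     \<not> strat_reaches G i si I \<or>
     \<not> (\<exists>ti. replacement G i I si ti \<and> exp_util G u i \<mu> ti > exp_util G u i \<mu> si)"

definition cont_rational_at ::
  "('p,'a) efg \<Rightarrow> ('p \<Rightarrow> 'a list \<Rightarrow> real) \<Rightarrow> 'p \<Rightarrow> 'a list set \<Rightarrow> ('p,'a) profile pmf
     \<Rightarrow> ('p,'a) strat \<Rightarrow> bool" where
  "cont_rational_at G u i I \<mu> si \<longleftrightarrow>
     (\<exists>ti\<in>strategies G i. strat_reaches G i ti I \<and>
        (\<forall>I'\<in>infosets G i. precedes I I' \<longrightarrow> ti I' = si I') \<and>
        rational_at G u i I \<mu> ti)"

definition strong_L1 ::
  "('p,'a) efg \<Rightarrow> ('p \<Rightarrow> 'a list \<Rightarrow> real) \<Rightarrow> ('p \<Rightarrow> 'a list set \<Rightarrow> ('p,'a) profile pmf)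
     \<Rightarrow> 'p \<Rightarrow> ('p,'a) strat set" where
  "strong_L1 G u b i =
     {si \<in> strategies G i. \<forall>I\<in>infosets G i. rational_at G u i I (b i I) si}"

definition backward_L1 ::
  "('p,'a) efg \<Rightarrow> ('p \<Rightarrow> 'a list \<Rightarrow> real) \<Rightarrow> ('p \<Rightarrow> 'a list set \<Rightarrow> ('p,'a) profile pmf)
     \<Rightarrow> 'p \<Rightarrow> ('p,'a) strat set" where
  "backward_L1 G u b i =
     {si \<in> strategies G i. \<forall>I\<in>infosets G i. cont_rational_at G u i I (b i I) si}"

definition Zof :: "('p,'a) efg \<Rightarrow> ('p \<Rightarrow> ('p,'a) strat set) \<Rightarrow> 'a list set" where
  "Zof G X = {outcome G s | s. s \<in> (\<Pi>\<^sub>E j\<in>agents G.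
                 if j = nature G then strategies G j else X j)}"

end

theory Submission
  imports Defs
begin

locale game =
  fixes G :: "('p,'a) efg" and u :: "'p \<Rightarrow> 'a list \<Rightarrow> real"
    and b :: "'p \<Rightarrow> 'a list set \<Rightarrow> ('p,'a) profile pmf"
  assumes wf: "wf_game G"
    and bel: "\<forall>i\<in>players G. belief_system G i (b i) \<and> full_support G i (b i)"
begin

lemma hist_prefix: "h \<in> hist G \<Longrightarrow> prefix h' h \<Longrightarrow> h' \<in> hist G"
  using wf unfolding wf_game_def by blast

lemma nonterm_props:
  assumes "nonterm_hist G h"
  shows "turn G h \<in> agents G" "h \<in> infoset G h"
    "\<And>h'. h' \<in> infoset G h \<Longrightarrow> nonterm_hist G h' \<and> turn G h' = turn G h \<and> infoset G h' = infoset G h \<and> {a. h' @ [a] \<in> hist G} = {a. h @ [a] \<in> hist G}"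
  using wf assms unfolding wf_game_def by blast+

lemma infosetsD:
  assumes "I \<in> infosets G i" "h \<in> I"
  shows "nonterm_hist G h" "turn G h = i" "infoset G h = I"
proof -
  obtain h0 where "I = infoset G h0" "nonterm_hist G h0" "turn G h0 = i"
    using assms(1) unfolding infosets_def by blast
  then show "nonterm_hist G h" "turn G h = i" "infoset G h = I"
    using nonterm_props(3)[of h0 h] assms(2) by auto
qed

lemma infosetsI: "nonterm_hist G h \<Longrightarrow> turn G h = i \<Longrightarrow> infoset G h \<in> infosets G i"
  unfolding infosets_def by blast

lemma infosets_ne: "I \<in> infosets G i \<Longrightarrow> \<exists>h. h \<in> I"
  unfolding infosets_def using nonterm_props(2) by blast

lemma nonterm_hist: "nonterm_hist G h \<Longrightarrow> h \<in> hist G"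
  unfolding nonterm_hist_def by blast

lemma nonterm_prefix: "h \<in> hist G \<Longrightarrow> k < length h \<Longrightarrow> nonterm_hist G (take k h)"
  unfolding nonterm_hist_def
  by (metis hist_prefix take_Suc_conv_app_nth take_is_prefix)

lemma players_agents: "players G \<subseteq> agents G" by (auto simp: agents_def)

lemma finite_hist: "finite (hist G)" using wf unfolding wf_game_def by blast

lemma finite_infosets: "finite (infosets G i)"
proof -
  have "infosets G i \<subseteq> infoset G ` hist G"
    unfolding infosets_def using nonterm_hist by blast
  then show ?thesis using finite_hist finite_surj by blast
qed

lemma finite_avail: "finite (avail G I)"
proof -
  have "avail G I \<subseteq> last ` hist G"
    unfolding avail_def by (auto intro!: image_eqI[where x="_ @ [_]"])
  then show ?thesis using finite_hist finite_surj by blast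
qed

lemma finite_strategies: "finite (strategies G i)"
  unfolding strategies_def by (intro finite_PiE finite_infosets finite_avail)

lemma finite_agents: "finite (agents G)"
  using wf unfolding wf_game_def agents_def by auto

lemma finite_others: "finite (others G i)"
  unfolding others_def by (intro finite_PiE finite_strategies) (use finite_agents in auto)

definition valid :: "('p,'a) profile \<Rightarrow> bool" where
  "valid s \<longleftrightarrow> (\<forall>j\<in>agents G. s j \<in> strategies G j)"

lemma valid_upd:
  assumes "sm \<in> others G i" "t \<in> strategies G i"
  shows "valid (sm(i := t))"
  using assms unfolding valid_def others_def by (auto simp: PiE_iff)

lemma consistent_take: "consistent G s h \<Longrightarrow> consistent G s (take n h)"
  unfolding consistent_def by (auto simp: min_def)

lemma cons_take_eq:
  assumes "consistent G s h1" "consistent G s h2" "n \<le> length h1" "n \<le> length h2"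
  shows "take n h1 = take n h2"
  using assms(3,4)
proof (induction n)
  case 0 then show ?case by simp
next
  case (Suc n)
  then have IH: "take n h1 = take n h2" by simp
  have "h1 ! n = h2 ! n"
    using assms(1,2) Suc.prems IH unfolding consistent_def by (metis Suc_le_eq)
  then show ?case using Suc.prems IH by (simp add: take_Suc_conv_app_nth)
qed

lemma cons_comparable:
  assumes "consistent G s h1" "consistent G s h2"
  shows "prefix h1 h2 \<or> prefix h2 h1"
proof (cases "length h1 \<le> length h2")
  case True
  then have "take (length h1) h2 = h1" using cons_take_eq[OF assms, of "length h1"] by simp
  then show ?thesis by (metis take_is_prefix)
next
  case False
  then have "take (length h2) h1 = h2" using cons_take_eq[OF assms, of "length h2"] by simp
  then show ?thesis by (metis take_is_prefix)
qed

lemma terminal_no_strict: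
  assumes "z \<in> terminals G" "h \<in> hist G" "prefix z h"
  shows "h = z"
proof (rule ccontr)
  assume "h \<noteq> z"
  obtain t where t: "h = z @ t" using assms(3) prefix_def by blast
  then obtain c t' where "t = c # t'" using \<open>h \<noteq> z\<close> by (cases t) auto
  then have "prefix (z @ [c]) h" using t by simp
  then have "z @ [c] \<in> hist G" using hist_prefix[OF assms(2)] by blast
  then show False using assms(1) unfolding terminals_def by blast
qed

lemma outcome_exists:
  assumes "valid s"
  shows "\<exists>z. z \<in> terminals G \<and> consistent G s z"
proof -
  define C where "C = {h\<in>hist G. consistent G s h}"
  have finC: "finite C" using finite_hist unfolding C_def by simp
  have "[] \<in> C" using wf unfolding C_def wf_game_def consistent_def by simp
  then have ne: "length ` C \<noteq> {}" by blast
  obtain h where hC: "h \<in> C" and hm: "length h = Max (length ` C)"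
    using Max_in[OF finite_imageI[OF finC] ne] by auto
  have ge: "\<And>h'. h' \<in> C \<Longrightarrow> length h' \<le> length h"
    using hm finC by simp
  have "h \<in> terminals G"
  proof (rule ccontr)
    assume "h \<notin> terminals G"
    then obtain a where a: "h @ [a] \<in> hist G" using hC unfolding C_def terminals_def by blast
    then have nt: "nonterm_hist G h" using hC unfolding C_def nonterm_hist_def by blast
    define j where "j = turn G h"
    have j: "j \<in> agents G" using nonterm_props(1)[OF nt] j_def by simp
    have I: "infoset G h \<in> infosets G j" using infosetsI[OF nt] j_def by simp
    define c where "c = s j (infoset G h)"
    have "c \<in> avail G (infoset G h)"
      using assms j I unfolding valid_def strategies_def c_def by (auto simp: PiE_iff)
    then obtain h' where h': "h' \<in> infoset G h" "h' @ [c] \<in> hist G"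
      unfolding avail_def by blast
    have hc: "h @ [c] \<in> hist G" using nonterm_props(3)[OF nt h'(1)] h'(2) by blast
    have "consistent G s (h @ [c])"
      using hC unfolding C_def consistent_def c_def j_def
      by (auto simp: nth_append less_Suc_eq)
    then have "h @ [c] \<in> C" using hc unfolding C_def by blast
    then show False using ge by fastforce
  qed
  then show ?thesis using hC unfolding C_def by blast
qed

lemma outcome_unique:
  assumes "z1 \<in> terminals G" "consistent G s z1" "z2 \<in> terminals G" "consistent G s z2"
  shows "z1 = z2"
  using cons_comparable[OF assms(2,4)] terminal_no_strict assms
  unfolding terminals_def by blast

lemma outcome_props:
  assumes "valid s"
  shows "outcome G s \<in> terminals G" "consistent G s (outcome G s)"
proof -
  have "\<exists>!z. z \<in> terminals G \<and> consistent G s z"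
    using outcome_exists[OF assms] outcome_unique by blast
  then have "outcome G s \<in> terminals G \<and> consistent G s (outcome G s)"
    unfolding outcome_def by (rule theI')
  then show "outcome G s \<in> terminals G" "consistent G s (outcome G s)" by auto
qed

lemma outcome_eqI:
  assumes "valid s" "z \<in> terminals G" "consistent G s z"
  shows "outcome G s = z"
  using outcome_unique[OF outcome_props[OF assms(1)] assms(2,3)] .

lemma cons_prefix_outcome:
  assumes "valid s" "h \<in> hist G" "consistent G s h"
  shows "prefix h (outcome G s)"
  using cons_comparable[OF assms(3) outcome_props(2)[OF assms(1)]]
    terminal_no_strict[OF outcome_props(1)[OF assms(1)] assms(2)] by auto

lemma outcome_agree:
  assumes "valid s" "valid t"
    and "\<And>k. k < length (outcome G s) \<Longrightarrow>
       t (turn G (take k (outcome G s))) (infoset G (take k (outcome G s))) =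
       s (turn G (take k (outcome G s))) (infoset G (take k (outcome G s)))"
  shows "outcome G t = outcome G s"
  apply (rule outcome_eqI[OF assms(2) outcome_props(1)[OF assms(1)]])
  using outcome_props(2)[OF assms(1)] assms(3) unfolding consistent_def by simp

lemma exp_eq:
  assumes "i \<in> players G" "I \<in> infosets G i" "h \<in> I" "h' \<in> I"
  shows "experience G i h' = experience G i h"
proof -
  have "nonterm_hist G h" "turn G h = i" "infoset G h = I" using infosetsD assms(2,3) by auto
  then show ?thesis using wf assms(1,4) unfolding wf_game_def perfect_recall_def by blast
qed

lemma in_experience:
  "(J, a) \<in> set (experience G i h) \<longleftrightarrow>
     (\<exists>k<length h. turn G (take k h) = i \<and> infoset G (take k h) = J \<and> h ! k = a)"
  unfolding experience_def by auto

lemma path_infoset: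
  assumes "i \<in> players G" "I \<in> infosets G i" "h \<in> I" "h0 \<in> I" "k < length h0"
    "turn G (take k h0) = i"
  shows "\<exists>k'<length h. turn G (take k' h) = i \<and> infoset G (take k' h) = infoset G (take k h0)
          \<and> h ! k' = h0 ! k"
proof -
  have "(infoset G (take k h0), h0 ! k) \<in> set (experience G i h0)"
    using assms(5,6) in_experience by blast
  then have "(infoset G (take k h0), h0 ! k) \<in> set (experience G i h)"
    using exp_eq[OF assms(1,2,4,3)] by simp
  then show ?thesis using in_experience by blast
qed

lemma take_in_infoset:
  assumes "h \<in> hist G" "k < length h"
  shows "take k h \<in> infoset G (take k h)" "nonterm_hist G (take k h)"
    "turn G (take k h) = i \<Longrightarrow> infoset G (take k h) \<in> infosets G i"
  using nonterm_prefix[OF assms] nonterm_props(2) infosetsI by auto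

lemma no_strict_self:
  assumes "i \<in> players G" "I \<in> infosets G i"
  shows "h1 \<in> I \<Longrightarrow> h2 \<in> I \<Longrightarrow> \<not> strict_prefix h1 h2"
proof (induction "length h2" arbitrary: h1 h2 rule: less_induct)
  case less
  show ?case
  proof
    assume sp: "strict_prefix h1 h2"
    then have lt: "length h1 < length h2" by (simp add: prefix_length_less)
    have th: "take (length h1) h2 = h1" using sp by (metis append_eq_conv_conj prefix_def strict_prefix_def)
    have t1: "turn G h1 = i" "infoset G h1 = I" using infosetsD assms(2) less.prems(1) by auto
    obtain k' where k': "k' < length h1" "infoset G (take k' h1) = infoset G h1"
      using path_infoset[OF assms less.prems(1,2) lt] th t1 by auto
    have h1h: "h1 \<in> hist G" using infosetsD(1)[OF assms(2) less.prems(1)] nonterm_hist by blast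
    have "take k' h1 \<in> I" using take_in_infoset(1)[OF h1h k'(1)] k'(2) t1 by simp
    moreover have "strict_prefix (take k' h1) h1"
      using k'(1) by (metis length_take min.absorb4 order_less_irrefl strict_prefix_def take_is_prefix)
    ultimately show False using less.hyps[OF lt] less.prems(1) by blast
  qed
qed

lemma infosets_all: "i \<in> agents G \<Longrightarrow> infosets G i \<subseteq> all_infosets G"
  unfolding all_infosets_def by blast

lemma po: "partial_order_on (all_infosets G)
       {(I, I'). I \<in> all_infosets G \<and> I' \<in> all_infosets G \<and> precedes I I'}"
  using wf unfolding wf_game_def by blast

lemma prec_trans:
  assumes "i \<in> agents G" "I \<in> infosets G i" "J \<in> infosets G i" "K \<in> infosets G i"
    "precedes I J" "precedes J K"
  shows "precedes I K"
  using partial_order_onD(2)[OF po] infosets_all[OF assms(1)] assms(2-6)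
  unfolding trans_def by blast

lemma prec_antisym:
  assumes "i \<in> agents G" "I \<in> infosets G i" "J \<in> infosets G i"
    "precedes I J" "precedes J I"
  shows "I = J"
  using partial_order_onD(3)[OF po] infosets_all[OF assms(1)] assms(2-5)
  unfolding antisym_def by blast

lemma strict_not_rev:
  assumes "i \<in> players G" "I \<in> infosets G i" "J \<in> infosets G i" "strictly_precedes J I"
  shows "\<not> precedes I J"
proof
  assume "precedes I J"
  moreover have "precedes J I" using assms(4) unfolding strictly_precedes_def precedes_def
    by (meson strict_prefix_def)
  ultimately have "I = J" using prec_antisym assms players_agents by blast
  then show False using no_strict_self[OF assms(1,2)] assms(4) unfolding strictly_precedes_def by blast
qed

lemma precedes_refl: "I \<in> infosets G i \<Longrightarrow> precedes I I"
  using infosets_ne unfolding precedes_def by blast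

lemma exp_act:
  assumes "i \<in> players G" "I \<in> infosets G i" "t \<in> strategies G i" "strat_reaches G i t I"
    "h \<in> I" "k < length h" "turn G (take k h) = i"
  shows "t (infoset G (take k h)) = h ! k"
proof -
  obtain sm h' where sm: "sm \<in> others G i" "h' \<in> I" "prefix h' (outcome G (sm(i := t)))"
    using assms(4) unfolding strat_reaches_def reaches_def by blast
  obtain k' where k': "k' < length h'" "turn G (take k' h') = i"
     "infoset G (take k' h') = infoset G (take k h)" "h' ! k' = h ! k"
    using path_infoset[OF assms(1,2) sm(2) assms(5,6,7)] by blast
  define z where "z = outcome G (sm(i := t))"
  have c: "consistent G (sm(i := t)) z" using outcome_props(2)[OF valid_upd[OF sm(1) assms(3)]] z_def by simp
  have "take k' z = take k' h'" "z ! k' = h' ! k'" using sm(3) k'(1) unfolding z_def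
    by (auto simp: prefix_def nth_append)
  moreover have "k' < length z" using sm(3) k'(1) z_def prefix_length_le by fastforce
  ultimately show ?thesis using c k' unfolding consistent_def by force
qed

lemma reach_via:
  assumes "sm \<in> others G i" "t \<in> strategies G i" "h \<in> I" "h \<in> hist G"
    "consistent G (sm(i := t)) h"
  shows "reaches G (sm(i := t)) I"
  using cons_prefix_outcome[OF valid_upd[OF assms(1,2)] assms(4,5)] assms(3)
  unfolding reaches_def by blast

lemma reach_path_gen:
  assumes "sm \<in> others G i" "t \<in> strategies G i" "t' \<in> strategies G i"
    "h \<in> I" "h \<in> hist G" "prefix h (outcome G (sm(i := t)))"
    "\<And>k. k < length h \<Longrightarrow> turn G (take k h) = i \<Longrightarrow>
        t' (infoset G (take k h)) = t (infoset G (take k h))"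
  shows "reaches G (sm(i := t')) I"
proof -
  have "consistent G (sm(i := t)) h"
    using consistent_take[OF outcome_props(2)[OF valid_upd[OF assms(1,2)]], of "length h"] assms(6)
    by (metis append_eq_conv_conj prefix_def)
  then have "consistent G (sm(i := t')) h"
    using assms(7) unfolding consistent_def by (metis fun_upd_apply)
  then show ?thesis using reach_via assms by blast
qed

lemma reaches_hist:
  assumes "I \<in> infosets G i" "h \<in> I" shows "h \<in> hist G"
  using infosetsD(1)[OF assms] nonterm_hist by blast

lemma reach_path:
  assumes "i \<in> players G" "I \<in> infosets G i" "sm \<in> others G i" "t \<in> strategies G i" "t' \<in> strategies G i"
    "reaches G (sm(i := t)) I"
    "\<And>J. J \<in> infosets G i \<Longrightarrow> strictly_precedes J I \<Longrightarrow> t' J = t J"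
  shows "reaches G (sm(i := t')) I"
proof -
  obtain h where h: "h \<in> I" "prefix h (outcome G (sm(i := t)))"
    using assms(6) unfolding reaches_def by blast
  have hh: "h \<in> hist G" using reaches_hist[OF assms(2) h(1)] .
  show ?thesis
  proof (rule reach_path_gen[OF assms(3,4,5) h(1) hh h(2)])
    fix k assume k: "k < length h" "turn G (take k h) = i"
    have "infoset G (take k h) \<in> infosets G i" using take_in_infoset(3)[OF hh k(1) k(2)] .
    moreover have "strictly_precedes (infoset G (take k h)) I"
      unfolding strictly_precedes_def
      using take_in_infoset(1)[OF hh k(1)] h(1) k(1)
      by (metis length_take min.absorb4 order_less_irrefl strict_prefix_def take_is_prefix)
    ultimately show "t' (infoset G (take k h)) = t (infoset G (take k h))" using assms(7) by blast
  qed
qed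

lemma reach_prod:
  assumes "i \<in> players G" "I \<in> infosets G i" "t \<in> strategies G i" "strat_reaches G i t I"
    "sm \<in> others_reaching G i I"
  shows "reaches G (sm(i := t)) I"
proof -
  obtain si where si: "sm \<in> others G i" "si \<in> strategies G i" "reaches G (sm(i := si)) I"
    using assms(5) unfolding others_reaching_def by blast
  obtain h where h: "h \<in> I" "prefix h (outcome G (sm(i := si)))"
    using si(3) unfolding reaches_def by blast
  show ?thesis
  proof (rule reach_path_gen[OF si(1,2) assms(3) h(1) reaches_hist[OF assms(2) h(1)] h(2)])
    fix k assume k: "k < length h" "turn G (take k h) = i"
    have "consistent G (sm(i := si)) h"
      using consistent_take[OF outcome_props(2)[OF valid_upd[OF si(1,2)]], of "length h"] h(2)
      by (metis append_eq_conv_conj prefix_def)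
    then have "(sm(i := si)) (turn G (take k h)) (infoset G (take k h)) = h ! k"
      using k(1) unfolding consistent_def by blast
    then have "si (infoset G (take k h)) = h ! k" using k(2) by simp
    then show "t (infoset G (take k h)) = si (infoset G (take k h))"
      using exp_act[OF assms(1-4) h(1) k] by simp
  qed
qed

lemma reach_earlier:
  assumes "i \<in> players G" "valid s" "reaches G s J'" "J \<in> infosets G i" "J' \<in> infosets G i"
    "precedes J J'"
  shows "reaches G s J"
proof -
  obtain h' where h': "h' \<in> J'" "prefix h' (outcome G s)" using assms(3) unfolding reaches_def by blast
  obtain h1 h2 where h12: "h1 \<in> J" "h2 \<in> J'" "prefix h1 h2" using assms(6) unfolding precedes_def by blast
  show ?thesis
  proof (cases "h1 = h2")
    case True
    then have "J = J'" using infosetsD(3)[OF assms(4) h12(1)] infosetsD(3)[OF assms(5) h12(2)] by simp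
    then show ?thesis using assms(3) by simp
  next
    case False
    then have lt: "length h1 < length h2" using h12(3)
      by (metis prefix_length_less strict_prefix_def)
    have th: "take (length h1) h2 = h1" using h12(3) by (metis append_eq_conv_conj prefix_def)
    obtain k' where k': "k' < length h'" "infoset G (take k' h') = infoset G h1"
      using path_infoset[OF assms(1,5) h'(1) h12(2) lt] th infosetsD(2)[OF assms(4) h12(1)] by auto
    have hh: "h' \<in> hist G" using reaches_hist[OF assms(5) h'(1)] .
    have "take k' h' \<in> J" using take_in_infoset(1)[OF hh k'(1)] k'(2) infosetsD(3)[OF assms(4) h12(1)] by simp
    moreover have "prefix (take k' h') (outcome G s)" using h'(2)
      by (meson prefix_order.trans take_is_prefix)
    ultimately show ?thesis unfolding reaches_def by blast
  qed
qed

abbreviation U where "U i I t \<equiv> exp_util G u i (b i I) t"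

lemma bel_i: "i \<in> players G \<Longrightarrow> belief_system G i (b i) \<and> full_support G i (b i)"
  using bel by blast

lemma supp:
  assumes "i \<in> players G" "I \<in> infosets G i"
  shows "set_pmf (b i I) \<subseteq> others_reaching G i I"
proof -
  have "measure_pmf.prob (b i I) (others_reaching G i I) = 1"
    using bel_i[OF assms(1)] assms(2) unfolding belief_system_def by blast
  then have "AE x in measure_pmf (b i I). x \<in> others_reaching G i I"
    by (subst (asm) measure_pmf.prob_eq_1) auto
  then show ?thesis by (auto simp: AE_measure_pmf_iff)
qed

lemma finite_SR: "finite (others_reaching G i I)"
  using finite_others unfolding others_reaching_def by simp

lemma SR_others: "sm \<in> others_reaching G i I \<Longrightarrow> sm \<in> others G i"
  unfolding others_reaching_def by blast

lemma U_sum: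
  assumes "i \<in> players G" "I \<in> infosets G i"
  shows "U i I t = (\<Sum>sm\<in>others_reaching G i I. pmf (b i I) sm * u i (outcome G (sm(i := t))))"
  unfolding exp_util_def
  by (subst integral_measure_pmf_real[OF finite_SR]) (use supp[OF assms] in \<open>auto simp: mult.commute\<close>)

lemma outcome_eq_i:
  assumes "sm \<in> others G i" "t \<in> strategies G i" "t' \<in> strategies G i"
    "\<And>k. k < length (outcome G (sm(i := t))) \<Longrightarrow> turn G (take k (outcome G (sm(i := t)))) = i \<Longrightarrow>
       t' (infoset G (take k (outcome G (sm(i := t))))) = t (infoset G (take k (outcome G (sm(i := t)))))"
  shows "outcome G (sm(i := t')) = outcome G (sm(i := t))"
  by (rule outcome_agree[OF valid_upd[OF assms(1,2)] valid_upd[OF assms(1,3)]])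
     (use assms(4) in auto)

lemma outcome_hist: "valid s \<Longrightarrow> outcome G s \<in> hist G"
  using outcome_props(1) unfolding terminals_def by blast

lemma U_loc:
  assumes "i \<in> players G" "I \<in> infosets G i" "t1 \<in> strategies G i" "t2 \<in> strategies G i"
    "strat_reaches G i t1 I" "strat_reaches G i t2 I"
    "\<And>J. J \<in> infosets G i \<Longrightarrow> precedes I J \<Longrightarrow> t1 J = t2 J"
  shows "U i I t1 = U i I t2"
proof -
  have "outcome G (sm(i := t2)) = outcome G (sm(i := t1))" if sm: "sm \<in> others_reaching G i I" for sm
  proof -
    have smo: "sm \<in> others G i" using sm SR_others by blast
    obtain h where h: "h \<in> I" "prefix h (outcome G (sm(i := t1)))"
      using reach_prod[OF assms(1,2,3,5) sm] unfolding reaches_def by blast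
    define z where "z = outcome G (sm(i := t1))"
    have zh: "z \<in> hist G" using outcome_hist[OF valid_upd[OF smo assms(3)]] z_def by simp
    show ?thesis
    proof (rule outcome_eq_i[OF smo assms(3,4)], fold z_def)
      fix k assume k: "k < length z" "turn G (take k z) = i"
      show "t2 (infoset G (take k z)) = t1 (infoset G (take k z))"
      proof (cases "k < length h")
        case True
        then have "take k z = take k h" using h(2) unfolding z_def by (auto simp: prefix_def)
        then show ?thesis using exp_act[OF assms(1,2,3,5) h(1) True] exp_act[OF assms(1,2,4,6) h(1) True] k(2)
          by simp
      next
        case False
        then have "prefix h (take k z)" using h(2) unfolding z_def
          by (metis prefix_def take_append take_all_iff diff_is_0_eq append.right_neutral not_le less_or_eq_imp_le le_antisym)
        then have "precedes I (infoset G (take k z))"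
          unfolding precedes_def using take_in_infoset(1)[OF zh k(1)] h(1) by blast
        then show ?thesis using assms(7) take_in_infoset(3)[OF zh k] by metis
      qed
    qed
  qed
  then show ?thesis using U_sum[OF assms(1,2)] by simp
qed

lemma not_reach_same:
  assumes "i \<in> players G" "J \<in> infosets G i" "t \<in> strategies G i" "t' \<in> strategies G i"
    "sm \<in> others G i" "\<not> reaches G (sm(i := t)) J"
    "\<And>J'. J' \<in> infosets G i \<Longrightarrow> \<not> precedes J J' \<Longrightarrow> t' J' = t J'"
  shows "outcome G (sm(i := t')) = outcome G (sm(i := t))"
proof (rule outcome_eq_i[OF assms(5,3,4)])
  define z where "z = outcome G (sm(i := t))"
  have v: "valid (sm(i := t))" using valid_upd[OF assms(5,3)] .
  have zh: "z \<in> hist G" using outcome_hist[OF v] z_def by simp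
  fix k assume k: "k < length (outcome G (sm(i := t)))" "turn G (take k (outcome G (sm(i := t)))) = i"
  then have k': "k < length z" "turn G (take k z) = i" using z_def by auto
  have J': "infoset G (take k z) \<in> infosets G i" using take_in_infoset(3)[OF zh k'] .
  have "reaches G (sm(i := t)) (infoset G (take k z))"
    unfolding reaches_def z_def using take_in_infoset(1)[OF zh k'(1)] z_def by (metis take_is_prefix)
  then have "\<not> precedes J (infoset G (take k z))"
    using reach_earlier[OF assms(1) v _ assms(2) J'] assms(6) by blast
  then show "t' (infoset G (take k (outcome G (sm(i := t))))) = t (infoset G (take k (outcome G (sm(i := t)))))"
    using assms(7) J' z_def by simp
qed

lemma SR_mono:
  assumes "i \<in> players G" "I \<in> infosets G i" "J \<in> infosets G i" "precedes I J"
  shows "others_reaching G i J \<subseteq> others_reaching G i I"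
  using reach_earlier[OF assms(1) valid_upd _ assms(2,3,4)] unfolding others_reaching_def by blast

lemma U_cond:
  assumes "i \<in> players G" "I \<in> infosets G i" "J \<in> infosets G i" "precedes I J"
    "t \<in> strategies G i" "t' \<in> strategies G i"
    "\<And>J'. J' \<in> infosets G i \<Longrightarrow> \<not> precedes J J' \<Longrightarrow> t' J' = t J'"
  shows "U i I t' - U i I t = measure_pmf.prob (b i I) (others_reaching G i J) * (U i J t' - U i J t)"
proof -
  define SI where "SI = others_reaching G i I"
  define SJ where "SJ = others_reaching G i J"
  define P where "P = measure_pmf.prob (b i I) SJ"
  define d where "d sm = u i (outcome G (sm(i := t'))) - u i (outcome G (sm(i := t)))" for sm
  have sub: "SJ \<subseteq> SI" using SR_mono[OF assms(1-4)] SI_def SJ_def by simp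
  have finJ: "finite SJ" "finite SI" using finite_SR SJ_def SI_def by auto
  have P_sum: "P = (\<Sum>sm\<in>SJ. pmf (b i I) sm)" unfolding P_def by (simp add: measure_measure_pmf_finite finJ)
  have SJne: "SJ \<noteq> {}"
  proof
    assume "SJ = {}"
    moreover have "measure_pmf.prob (b i J) SJ = 1"
      using bel_i[OF assms(1)] assms(3) unfolding belief_system_def SJ_def by blast
    ultimately show False by simp
  qed
  have pos: "\<And>sm. sm \<in> SI \<Longrightarrow> pmf (b i I) sm > 0"
    using bel_i[OF assms(1)] assms(2) unfolding full_support_def SI_def by blast
  have Ppos: "P > 0" unfolding P_sum
    using SJne finJ(1) sub pos by (intro sum_pos) auto
  have cond: "\<forall>E. measure_pmf.prob (b i J) E = measure_pmf.prob (b i I) (E \<inter> SJ) / P"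
    using bel_i[OF assms(1)] assms(2,3,4) Ppos unfolding belief_system_def SJ_def P_def by blast
  have pJ: "pmf (b i J) sm = pmf (b i I) sm / P" if "sm \<in> SJ" for sm
    using cond[rule_format, of "{sm}"] that by (simp add: measure_pmf_single)
  have d0: "d sm = 0" if "sm \<in> SI - SJ" for sm
  proof -
    have smo: "sm \<in> others G i" using that SI_def SR_others by blast
    have "\<not> reaches G (sm(i := t)) J" using that assms(5) smo unfolding SJ_def others_reaching_def by blast
    then show ?thesis unfolding d_def using not_reach_same[OF assms(1,3,5,6) smo _ assms(7)] by simp
  qed
  have "U i I t' - U i I t = (\<Sum>sm\<in>SI. pmf (b i I) sm * d sm)"
    unfolding U_sum[OF assms(1,2)] SI_def[symmetric] d_def by (simp add: sum_subtractf right_diff_distrib)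
  also have "\<dots> = (\<Sum>sm\<in>SJ. pmf (b i I) sm * d sm)"
    using d0 sub finJ by (intro sum.mono_neutral_right) auto
  also have "\<dots> = P * (\<Sum>sm\<in>SJ. pmf (b i J) sm * d sm)"
    using Ppos pJ by (simp add: sum_distrib_left)
  also have "(\<Sum>sm\<in>SJ. pmf (b i J) sm * d sm) = U i J t' - U i J t"
    unfolding U_sum[OF assms(1,3)] SJ_def[symmetric] d_def by (simp add: sum_subtractf right_diff_distrib)
  finally show ?thesis unfolding P_def SJ_def .
qed

definition splice :: "'p \<Rightarrow> 'a list set \<Rightarrow> ('p,'a) strat \<Rightarrow> ('p,'a) strat \<Rightarrow> ('p,'a) strat" where
  "splice i J s t = (\<lambda>I'. if I' \<in> infosets G i \<and> precedes J I' then s I' else t I')"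

lemma splice_strat:
  assumes "s \<in> strategies G i" "t \<in> strategies G i"
  shows "splice i J s t \<in> strategies G i"
  using assms unfolding strategies_def splice_def by (auto simp: PiE_iff extensional_def)

lemma strat_upd:
  assumes "s \<in> strategies G i" "J \<in> infosets G i" "a \<in> avail G J"
  shows "s(J := a) \<in> strategies G i"
  using PiE_fun_upd[where T="avail G" and x=J and y=a and f=s and S="infosets G i"] assms unfolding strategies_def
  by (simp add: insert_absorb)

lemma splice_reach:
  assumes "i \<in> players G" "J \<in> infosets G i" "s \<in> strategies G i" "t \<in> strategies G i"
    "strat_reaches G i t J"
  shows "strat_reaches G i (splice i J s t) J"
proof -
  obtain sm where sm: "sm \<in> others G i" "reaches G (sm(i := t)) J"
    using assms(5) unfolding strat_reaches_def by blast
  have "reaches G (sm(i := splice i J s t)) J"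
    using reach_path[OF assms(1,2) sm(1) assms(4) splice_strat[OF assms(3,4)] sm(2)]
      strict_not_rev[OF assms(1,2)] unfolding splice_def by auto
  then show ?thesis using sm(1) unfolding strat_reaches_def by blast
qed

lemma reach_path_strat:
  assumes "i \<in> players G" "J \<in> infosets G i" "t \<in> strategies G i" "t' \<in> strategies G i"
    "strat_reaches G i t J"
    "\<And>J'. J' \<in> infosets G i \<Longrightarrow> strictly_precedes J' J \<Longrightarrow> t' J' = t J'"
  shows "strat_reaches G i t' J"
  using reach_path[OF assms(1,2) _ assms(3,4) _ assms(6)] assms(5)
  unfolding strat_reaches_def by blast

definition Opt :: "'p \<Rightarrow> 'a list set \<Rightarrow> ('p,'a) strat \<Rightarrow> bool" where
  "Opt i J s \<longleftrightarrow> (\<forall>t\<in>strategies G i. U i J t \<le> U i J (splice i J s t))"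

lemma nonreach_U:
  assumes "i \<in> players G" "J \<in> infosets G i" "s \<in> strategies G i" "t \<in> strategies G i"
    "\<not> strat_reaches G i t J"
  shows "U i J t = U i J (splice i J s t)"
proof -
  have "outcome G (sm(i := splice i J s t)) = outcome G (sm(i := t))"
    if "sm \<in> others_reaching G i J" for sm
  proof -
    have smo: "sm \<in> others G i" using that SR_others by blast
    then have "\<not> reaches G (sm(i := t)) J" using assms(5) unfolding strat_reaches_def by blast
    then show ?thesis using not_reach_same[OF assms(1,2,4) splice_strat[OF assms(3,4)] smo]
      unfolding splice_def by auto
  qed
  then show ?thesis using U_sum[OF assms(1,2)] by simp
qed

lemma exists_reacher:
  assumes "i \<in> players G" "J \<in> infosets G i"
  shows "\<exists>t\<in>strategies G i. strat_reaches G i t J"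
proof -
  have "measure_pmf.prob (b i J) (others_reaching G i J) = 1"
    using bel_i[OF assms(1)] assms(2) unfolding belief_system_def by blast
  then have "others_reaching G i J \<noteq> {}" by auto
  then show ?thesis unfolding others_reaching_def strat_reaches_def by blast
qed

lemma strategies_ne: "strategies G i \<noteq> {}"
proof -
  have "avail G I \<noteq> {}" if I: "I \<in> infosets G i" for I
  proof -
    obtain h where h: "h \<in> I" using infosets_ne[OF I] by blast
    then obtain a where "h @ [a] \<in> hist G" using infosetsD(1)[OF I h] unfolding nonterm_hist_def by blast
    then show ?thesis using h unfolding avail_def by blast
  qed
  then show ?thesis unfolding strategies_def by (simp add: PiE_eq_empty_iff)
qed

lemma opt_step:
  assumes i: "i \<in> players G" and J0: "J0 \<in> infosets G i" and s: "s \<in> strategies G i"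
    and hyp: "\<And>J. J \<in> infosets G i \<Longrightarrow> precedes J0 J \<Longrightarrow> J \<noteq> J0 \<Longrightarrow> Opt i J s"
    and a: "a \<in> avail G J0" and t0: "t0 \<in> strategies G i" "strat_reaches G i t0 J0"
    and amax: "\<And>c. c \<in> avail G J0 \<Longrightarrow>
        U i J0 (splice i J0 (s(J0 := c)) t0) \<le> U i J0 (splice i J0 (s(J0 := a)) t0)"
  shows "Opt i J0 (s(J0 := a))"
proof -
  define ss where "ss = s(J0 := a)"
  have ss: "ss \<in> strategies G i" using strat_upd[OF s J0 a] ss_def by simp
  have ia: "i \<in> agents G" using i players_agents by blast
  define D where "D t = {J \<in> infosets G i. precedes J0 J \<and> J \<noteq> J0 \<and> t J \<noteq> s J}" for t
  have finD: "finite (D t)" for t using finite_infosets unfolding D_def by simp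
  have main: "U i J0 t \<le> U i J0 (splice i J0 ss t)"
    if "t \<in> strategies G i" "strat_reaches G i t J0" for t
    using that
  proof (induction "card (D t)" arbitrary: t rule: less_induct)
    case less
    note t = less.prems(1) and tr = less.prems(2)
    show ?case
    proof (cases "D t = {}")
      case True
      define c where "c = t J0"
      have c: "c \<in> avail G J0" using t J0 unfolding c_def strategies_def by (auto simp: PiE_iff)
      have sc: "s(J0 := c) \<in> strategies G i" using strat_upd[OF s J0 c] .
      have teq: "t = splice i J0 (s(J0 := c)) t"
      proof
        fix I'
        show "t I' = splice i J0 (s(J0 := c)) t I'"
        proof (cases "I' \<in> infosets G i \<and> precedes J0 I'")
          case True2: True
          show ?thesis
          proof (cases "I' = J0")
            case True then show ?thesis unfolding splice_def c_def by simp
          next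
            case False
            then have "I' \<notin> D t" using True by blast
            then have "t I' = s I'" using True2 False unfolding D_def by blast
            then show ?thesis using True2 False unfolding splice_def by simp
          qed
        next
          case False then show ?thesis unfolding splice_def by auto
        qed
      qed
      have "U i J0 t = U i J0 (splice i J0 (s(J0 := c)) t0)"
        apply (subst teq)
        apply (rule U_loc[OF i J0 splice_strat[OF sc t] splice_strat[OF sc t0(1)]
              splice_reach[OF i J0 sc t tr] splice_reach[OF i J0 sc t0]])
        unfolding splice_def by auto
      also have "\<dots> \<le> U i J0 (splice i J0 ss t0)" using amax[OF c] ss_def by simp
      also have "\<dots> = U i J0 (splice i J0 ss t)"
        by (rule U_loc[OF i J0 splice_strat[OF ss t0(1)] splice_strat[OF ss t]
              splice_reach[OF i J0 ss t0] splice_reach[OF i J0 ss t tr]])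
           (auto simp: splice_def)
      finally show ?thesis .
    next
      case False
      then obtain J1 where J1: "J1 \<in> D t" by blast
      have J1i: "J1 \<in> infosets G i" "precedes J0 J1" "J1 \<noteq> J0" using J1 unfolding D_def by auto
      define t' where "t' = splice i J1 s t"
      have t': "t' \<in> strategies G i" using splice_strat[OF s t] t'_def by simp
      have agree: "\<And>J'. J' \<in> infosets G i \<Longrightarrow> \<not> precedes J1 J' \<Longrightarrow> t' J' = t J'"
        unfolding t'_def splice_def by auto
      have "U i J0 t' - U i J0 t = measure_pmf.prob (b i J0) (others_reaching G i J1) * (U i J1 t' - U i J1 t)"
        by (rule U_cond[OF i J0 J1i(1,2) t t' agree])
      moreover have "U i J1 t \<le> U i J1 t'"
        using hyp[OF J1i] t unfolding Opt_def t'_def by blast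
      ultimately have le1: "U i J0 t \<le> U i J0 t'"
        by (smt (verit) measure_nonneg mult_nonneg_nonneg)
      have t'r: "strat_reaches G i t' J0"
      proof (rule reach_path_strat[OF i J0 t t' tr])
        fix J' assume J': "J' \<in> infosets G i" "strictly_precedes J' J0"
        have "\<not> precedes J1 J'"
        proof
          assume "precedes J1 J'"
          then have "precedes J0 J'" using prec_trans[OF ia J0 J1i(1) J'(1) J1i(2)] by blast
          then show False using strict_not_rev[OF i J0 J'(1,2)] by blast
        qed
        then show "t' J' = t J'" using agree J'(1) by blast
      qed
      have "D t' \<subseteq> D t - {J1}"
      proof
        fix J assume J: "J \<in> D t'"
        have nJ: "\<not> precedes J1 J"
        proof
          assume "precedes J1 J"
          then have "t' J = s J" using J unfolding D_def t'_def splice_def by auto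
          then show False using J unfolding D_def by auto
        qed
        then have "J \<noteq> J1" using precedes_refl[OF J1i(1)] by blast
        then show "J \<in> D t - {J1}" using J nJ agree unfolding D_def by auto
      qed
      then have "D t' \<subset> D t" using J1 by blast
      then have "card (D t') < card (D t)" using psubset_card_mono[OF finD] by blast
      then have le2: "U i J0 t' \<le> U i J0 (splice i J0 ss t')" using less.hyps t' t'r by blast
      have "splice i J0 ss t' = splice i J0 ss t"
      proof
        fix I'
        show "splice i J0 ss t' I' = splice i J0 ss t I'"
        proof (cases "I' \<in> infosets G i \<and> precedes J0 I'")
          case True then show ?thesis unfolding splice_def by simp
        next
          case False
          have "t' I' = t I'"
          proof (cases "I' \<in> infosets G i")
            case True
            then have "\<not> precedes J1 I'" using False prec_trans[OF ia J0 J1i(1) True J1i(2)] by blast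
            then show ?thesis using agree True by blast
          next
            case False then show ?thesis unfolding t'_def splice_def by simp
          qed
          then show ?thesis using False unfolding splice_def by auto
        qed
      qed
      then show ?thesis using le1 le2 by simp
    qed
  qed
  show ?thesis unfolding Opt_def ss_def[symmetric]
  proof
    fix t assume t: "t \<in> strategies G i"
    show "U i J0 t \<le> U i J0 (splice i J0 ss t)"
    proof (cases "strat_reaches G i t J0")
      case True then show ?thesis using main t by blast
    next
      case False then show ?thesis using nonreach_U[OF i J0 ss t] by simp
    qed
  qed
qed

lemma avail_ne: "I \<in> infosets G i \<Longrightarrow> avail G I \<noteq> {}"
proof -
  assume I: "I \<in> infosets G i"
  obtain h where h: "h \<in> I" using infosets_ne[OF I] by blast
  then obtain a where "h @ [a] \<in> hist G" using infosetsD(1)[OF I h] unfolding nonterm_hist_def by blast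
  then show ?thesis using h unfolding avail_def by blast
qed

lemma exist_opt_F:
  assumes i: "i \<in> players G"
  shows "F \<subseteq> infosets G i \<Longrightarrow> (\<forall>J\<in>F. \<forall>J'\<in>infosets G i. precedes J J' \<longrightarrow> J' \<in> F)
    \<Longrightarrow> \<exists>s\<in>strategies G i. \<forall>J\<in>F. Opt i J s"
proof (induction "card F" arbitrary: F rule: less_induct)
  case less
  have ia: "i \<in> agents G" using i players_agents by blast
  have finF: "finite F" using less.prems(1) finite_infosets finite_subset by blast
  show ?case
  proof (cases "F = {}")
    case True then show ?thesis using strategies_ne by blast
  next
    case False
    define pred where "pred J = {J' \<in> infosets G i. precedes J' J \<and> J' \<noteq> J}" for J
    define dep where "dep J = card (pred J)" for J
    have "Min (dep ` F) \<in> dep ` F" using Min_in[OF finite_imageI[OF finF]] False by blast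
    then obtain J0 where J0F: "J0 \<in> F" and J0m: "dep J0 = Min (dep ` F)" by (metis imageE)
    have J0: "J0 \<in> infosets G i" using J0F less.prems(1) by blast
    have minimal: "J = J0" if J: "J \<in> F" "precedes J J0" for J
    proof (rule ccontr)
      assume ne: "J \<noteq> J0"
      have Ji: "J \<in> infosets G i" using J less.prems(1) by blast
      have "pred J \<subseteq> pred J0"
      proof
        fix J' assume J': "J' \<in> pred J"
        then have J'i: "J' \<in> infosets G i" "precedes J' J" "J' \<noteq> J" unfolding pred_def by auto
        have "precedes J' J0" using prec_trans[OF ia J'i(1) Ji J0 J'i(2) J(2)] .
        moreover have "J' \<noteq> J0"
        proof
          assume "J' = J0"
          then have "J = J0" using prec_antisym[OF ia Ji J0 J(2)] J'i(2) by simp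
          then show False using ne by simp
        qed
        ultimately show "J' \<in> pred J0" using J'i(1) unfolding pred_def by blast
      qed
      moreover have "J \<in> pred J0" using Ji J(2) ne unfolding pred_def by blast
      moreover have "J \<notin> pred J" unfolding pred_def by blast
      ultimately have "pred J \<subset> pred J0" by blast
      moreover have "finite (pred J0)" using finite_infosets[of i] unfolding pred_def by simp
      ultimately have "dep J < dep J0" unfolding dep_def using psubset_card_mono by blast
      moreover have "dep J0 \<le> dep J" using J0m J(1) finF by simp
      ultimately show False by simp
    qed
    define F' where "F' = F - {J0}"
    have cF: "card F' < card F" using J0F finF unfolding F'_def by (metis card_Diff1_less)
    have F'sub: "F' \<subseteq> infosets G i" using less.prems(1) unfolding F'_def by blast
    have F'up: "\<forall>J\<in>F'. \<forall>J'\<in>infosets G i. precedes J J' \<longrightarrow> J' \<in> F'"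
    proof (intro ballI impI)
      fix J J' assume J: "J \<in> F'" "J' \<in> infosets G i" "precedes J J'"
      then have "J' \<in> F" using less.prems(2) unfolding F'_def by blast
      moreover have "J' \<noteq> J0" using minimal J unfolding F'_def by blast
      ultimately show "J' \<in> F'" unfolding F'_def by blast
    qed
    obtain s where s: "s \<in> strategies G i" "\<forall>J\<in>F'. Opt i J s"
      using less.hyps[OF cF F'sub F'up] by blast
    obtain t0 where t0: "t0 \<in> strategies G i" "strat_reaches G i t0 J0"
      using exists_reacher[OF i J0] by blast
    define f where "f c = U i J0 (splice i J0 (s(J0 := c)) t0)" for c
    have finA: "finite (avail G J0)" using finite_avail .
    have "Max (f ` avail G J0) \<in> f ` avail G J0"
      using Max_in[OF finite_imageI[OF finA]] avail_ne[OF J0] by blast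
    then obtain a where a: "a \<in> avail G J0" "f a = Max (f ` avail G J0)" by (metis imageE)
    have amax: "f c \<le> f a" if "c \<in> avail G J0" for c using a(2) finA that by simp
    have hyp: "Opt i J s" if "J \<in> infosets G i" "precedes J0 J" "J \<noteq> J0" for J
    proof -
      have "J \<in> F" using less.prems(2) J0F that by blast
      then show ?thesis using s(2) that unfolding F'_def by blast
    qed
    have optJ0: "Opt i J0 (s(J0 := a))"
      using opt_step[OF i J0 s(1) hyp a(1) t0] amax unfolding f_def by blast
    have optF': "Opt i J (s(J0 := a))" if J: "J \<in> F'" for J
    proof -
      have "splice i J (s(J0 := a)) = splice i J s"
      proof (intro ext)
        fix t I'
        have "I' \<in> infosets G i \<and> precedes J I' \<longrightarrow> I' \<noteq> J0"
          using minimal J unfolding F'_def by blast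
        then show "splice i J (s(J0 := a)) t I' = splice i J s t I'" unfolding splice_def by auto
      qed
      then show ?thesis using s(2) J unfolding Opt_def by simp
    qed
    have "\<forall>J\<in>F. Opt i J (s(J0 := a))"
      using optJ0 optF' unfolding F'_def by blast
    then show ?thesis using strat_upd[OF s(1) J0 a(1)] by blast
  qed
qed

lemma Opt_cont:
  assumes i: "i \<in> players G" and J: "J \<in> infosets G i" and s: "s \<in> strategies G i"
    and opt: "Opt i J s"
  shows "cont_rational_at G u i J (b i J) s"
proof -
  obtain t0 where t0: "t0 \<in> strategies G i" "strat_reaches G i t0 J"
    using exists_reacher[OF i J] by blast
  define ti where "ti = splice i J s t0"
  have ti: "ti \<in> strategies G i" "strat_reaches G i ti J"
    using splice_strat[OF s t0(1)] splice_reach[OF i J s t0] ti_def by auto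
  have agr: "\<forall>I'\<in>infosets G i. precedes J I' \<longrightarrow> ti I' = s I'" unfolding ti_def splice_def by auto
  have "rational_at G u i J (b i J) ti"
    unfolding rational_at_def
  proof (rule disjI2, rule notI)
    assume "\<exists>r. replacement G i J ti r \<and> U i J ti < U i J r"
    then obtain r where r: "r \<in> strategies G i" "\<And>I'. I' \<in> infosets G i \<Longrightarrow> strictly_precedes I' J \<Longrightarrow> r I' = ti I'"
      "U i J ti < U i J r" unfolding replacement_def by blast
    have rr: "strat_reaches G i r J" using reach_path_strat[OF i J ti(1) r(1) ti(2) r(2)] .
    have "U i J r \<le> U i J (splice i J s r)" using opt r(1) unfolding Opt_def by blast
    also have "\<dots> = U i J ti"
    proof (rule U_loc[OF i J splice_strat[OF s r(1)] ti(1) splice_reach[OF i J s r(1) rr] ti(2)])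
      fix J' assume "J' \<in> infosets G i" "precedes J J'"
      then show "splice i J s r J' = ti J'" using agr unfolding splice_def by auto
    qed
    finally show False using r(3) by simp
  qed
  then show ?thesis unfolding cont_rational_at_def using ti agr by blast
qed

lemma backward_ne:
  assumes i: "i \<in> players G"
  shows "backward_L1 G u b i \<noteq> {}"
proof -
  obtain s where s: "s \<in> strategies G i" "\<forall>J\<in>infosets G i. Opt i J s"
    using exist_opt_F[OF i, of "infosets G i"] by blast
  then have "s \<in> backward_L1 G u b i"
    unfolding backward_L1_def using Opt_cont[OF i] by blast
  then show ?thesis by blast
qed

lemma back_strong:
  assumes i: "i \<in> players G" and s: "s \<in> backward_L1 G u b i"
  shows "s \<in> strong_L1 G u b i"
proof -
  have ss: "s \<in> strategies G i" using s unfolding backward_L1_def by blast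
  have "rational_at G u i I (b i I) s" if I: "I \<in> infosets G i" for I
  proof (cases "strat_reaches G i s I")
    case False then show ?thesis unfolding rational_at_def by blast
  next
    case sr: True
    obtain ti where ti: "ti \<in> strategies G i" "strat_reaches G i ti I"
      "\<And>I'. I' \<in> infosets G i \<Longrightarrow> precedes I I' \<Longrightarrow> ti I' = s I'" "rational_at G u i I (b i I) ti"
      using s I unfolding backward_L1_def cont_rational_at_def by blast
    show ?thesis unfolding rational_at_def
    proof (rule disjI2, rule notI)
      assume "\<exists>r. replacement G i I s r \<and> U i I s < U i I r"
      then obtain r where r: "r \<in> strategies G i" "\<And>I'. I' \<in> infosets G i \<Longrightarrow> strictly_precedes I' I \<Longrightarrow> r I' = s I'"
        "U i I s < U i I r" unfolding replacement_def by blast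
      have rr: "strat_reaches G i r I" using reach_path_strat[OF i I ss r(1) sr r(2)] .
      have Us: "U i I s = U i I ti" using U_loc[OF i I ss ti(1) sr ti(2)] ti(3) by metis
      define r' where "r' = splice i I r ti"
      have r': "r' \<in> strategies G i" "strat_reaches G i r' I"
        using splice_strat[OF r(1) ti(1)] splice_reach[OF i I r(1) ti(1,2)] r'_def by auto
      have "U i I r' = U i I r"
        by (rule U_loc[OF i I r'(1) r(1) r'(2) rr]) (auto simp: r'_def splice_def)
      moreover have "replacement G i I ti r'"
        unfolding replacement_def using r'(1) strict_not_rev[OF i I] unfolding r'_def splice_def by auto
      ultimately show False using ti(2,4) r(3) Us unfolding rational_at_def by auto
    qed
  qed
  then show ?thesis using ss unfolding strong_L1_def by blast
qed

definition modify :: "'p \<Rightarrow> ('p,'a) strat \<Rightarrow> ('p,'a) strat \<Rightarrow> ('p,'a) strat" where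
  "modify i si c = (\<lambda>I. if I \<in> infosets G i \<and> strat_reaches G i si I then si I else c I)"

lemma modify_strat:
  "si \<in> strategies G i \<Longrightarrow> c \<in> strategies G i \<Longrightarrow> modify i si c \<in> strategies G i"
  unfolding strategies_def modify_def by (auto simp: PiE_iff extensional_def)

lemma modify_same:
  assumes "sm \<in> others G i" "si \<in> strategies G i" "c \<in> strategies G i"
  shows "outcome G (sm(i := modify i si c)) = outcome G (sm(i := si))"
proof (rule outcome_eq_i[OF assms(1,2) modify_strat[OF assms(2,3)]])
  fix k
  define z where "z = outcome G (sm(i := si))"
  assume k: "k < length (outcome G (sm(i := si)))" "turn G (take k (outcome G (sm(i := si)))) = i"
  then have k': "k < length z" "turn G (take k z) = i" using z_def by auto
  have zh: "z \<in> hist G" using outcome_hist[OF valid_upd[OF assms(1,2)]] z_def by simp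
  have "infoset G (take k z) \<in> infosets G i" using take_in_infoset(3)[OF zh k'] .
  moreover have "strat_reaches G i si (infoset G (take k z))"
    unfolding strat_reaches_def reaches_def using assms(1) take_in_infoset(1)[OF zh k'(1)] z_def
    by (metis take_is_prefix)
  ultimately show "modify i si c (infoset G (take k (outcome G (sm(i := si))))) =
          si (infoset G (take k (outcome G (sm(i := si)))))" unfolding modify_def z_def by simp
qed

lemma modify_backward:
  assumes i: "i \<in> players G" and si: "si \<in> strong_L1 G u b i" and c: "c \<in> backward_L1 G u b i"
  shows "modify i si c \<in> backward_L1 G u b i"
proof -
  have sis: "si \<in> strategies G i" using si unfolding strong_L1_def by blast
  have cs: "c \<in> strategies G i" using c unfolding backward_L1_def by blast
  define m where "m = modify i si c"
  have ms: "m \<in> strategies G i" using modify_strat[OF sis cs] m_def by simp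
  have mo: "\<And>sm. sm \<in> others G i \<Longrightarrow> outcome G (sm(i := m)) = outcome G (sm(i := si))"
    using modify_same[OF _ sis cs] m_def by simp
  have "cont_rational_at G u i I (b i I) m" if I: "I \<in> infosets G i" for I
  proof (cases "strat_reaches G i si I")
    case sr: True
    have mr: "strat_reaches G i m I" using sr mo unfolding strat_reaches_def reaches_def by metis
    have Um: "U i I m = U i I si" using U_sum[OF i I] mo SR_others by simp
    have "rational_at G u i I (b i I) m" unfolding rational_at_def
    proof (rule disjI2, rule notI)
      assume "\<exists>r. replacement G i I m r \<and> U i I m < U i I r"
      then obtain r where r: "r \<in> strategies G i" "\<And>I'. I' \<in> infosets G i \<Longrightarrow> strictly_precedes I' I \<Longrightarrow> r I' = m I'"
        "U i I m < U i I r" unfolding replacement_def by blast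
      have rr: "strat_reaches G i r I" using reach_path_strat[OF i I ms r(1) mr r(2)] .
      define r' where "r' = splice i I r si"
      have r': "r' \<in> strategies G i" "strat_reaches G i r' I"
        using splice_strat[OF r(1) sis] splice_reach[OF i I r(1) sis sr] r'_def by auto
      have "U i I r' = U i I r"
        by (rule U_loc[OF i I r'(1) r(1) r'(2) rr]) (auto simp: r'_def splice_def)
      moreover have "replacement G i I si r'"
        unfolding replacement_def using r'(1) strict_not_rev[OF i I] unfolding r'_def splice_def by auto
      moreover have "rational_at G u i I (b i I) si" using si I unfolding strong_L1_def by blast
      ultimately show False using sr r(3) Um unfolding rational_at_def by auto
    qed
    then show ?thesis unfolding cont_rational_at_def using ms mr by blast
  next
    case nr: False
    obtain ti where ti: "ti \<in> strategies G i" "strat_reaches G i ti I"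
      "\<forall>I'\<in>infosets G i. precedes I I' \<longrightarrow> ti I' = c I'" "rational_at G u i I (b i I) ti"
      using c I unfolding backward_L1_def cont_rational_at_def by blast
    have "\<forall>I'\<in>infosets G i. precedes I I' \<longrightarrow> ti I' = m I'"
    proof (intro ballI impI)
      fix I' assume I': "I' \<in> infosets G i" "precedes I I'"
      have "\<not> strat_reaches G i si I'"
      proof
        assume "strat_reaches G i si I'"
        then obtain sm where "sm \<in> others G i" "reaches G (sm(i := si)) I'" unfolding strat_reaches_def by blast
        then have "reaches G (sm(i := si)) I" using reach_earlier[OF i valid_upd[OF _ sis] _ I I'] by blast
        then show False using nr \<open>sm \<in> others G i\<close> unfolding strat_reaches_def by blast
      qed
      then show "ti I' = m I'" using ti(3) I' unfolding m_def modify_def by simp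
    qed
    then show ?thesis unfolding cont_rational_at_def using ti by blast
  qed
  then show ?thesis unfolding backward_L1_def m_def[symmetric] using ms by blast
qed

lemma main_eq: "Zof G (strong_L1 G u b) = Zof G (backward_L1 G u b)"
proof
  show "Zof G (backward_L1 G u b) \<subseteq> Zof G (strong_L1 G u b)"
  proof
    fix z assume "z \<in> Zof G (backward_L1 G u b)"
    then obtain s where s: "z = outcome G s"
      "s \<in> (\<Pi>\<^sub>E j\<in>agents G. if j = nature G then strategies G j else backward_L1 G u b j)"
      unfolding Zof_def by blast
    have "s \<in> (\<Pi>\<^sub>E j\<in>agents G. if j = nature G then strategies G j else strong_L1 G u b j)"
      using s(2) back_strong unfolding agents_def by (auto simp: PiE_iff)
    then show "z \<in> Zof G (strong_L1 G u b)" using s(1) unfolding Zof_def by blast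
  qed
next
  show "Zof G (strong_L1 G u b) \<subseteq> Zof G (backward_L1 G u b)"
  proof
    fix z assume "z \<in> Zof G (strong_L1 G u b)"
    then obtain s where s: "z = outcome G s"
      "s \<in> (\<Pi>\<^sub>E j\<in>agents G. if j = nature G then strategies G j else strong_L1 G u b j)"
      unfolding Zof_def by blast
    have nat: "nature G \<notin> players G" using wf unfolding wf_game_def by blast
    define c where "c j = (SOME x. x \<in> backward_L1 G u b j)" for j
    have c: "c j \<in> backward_L1 G u b j" if "j \<in> players G" for j
      using backward_ne[OF that] unfolding c_def by (simp add: some_in_eq)
    define s' where "s' j = (if j \<in> players G then modify j (s j) (c j) else s j)" for j
    have sj: "s j \<in> strong_L1 G u b j" if jp: "j \<in> players G" for j
    proof -
      have "s j \<in> (if j = nature G then strategies G j else strong_L1 G u b j)"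
        using s(2) jp unfolding agents_def PiE_iff by blast
      moreover have "j \<noteq> nature G" using jp nat by blast
      ultimately show ?thesis by simp
    qed
    have s'P: "s' \<in> (\<Pi>\<^sub>E j\<in>agents G. if j = nature G then strategies G j else backward_L1 G u b j)"
      using s(2) modify_backward[OF _ sj c] nat unfolding s'_def agents_def by (auto simp: PiE_iff extensional_def)
    have vs: "valid s" unfolding valid_def
    proof
      fix j assume j: "j \<in> agents G"
      show "s j \<in> strategies G j"
      proof (cases "j = nature G")
        case True then show ?thesis using s(2) j by (auto simp: PiE_iff)
      next
        case False then have "j \<in> players G" using j unfolding agents_def by blast
        then show ?thesis using sj unfolding strong_L1_def by blast
      qed
    qed
    have vs': "valid s'" unfolding valid_def
    proof
      fix j assume j: "j \<in> agents G"
      show "s' j \<in> strategies G j"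
      proof (cases "j = nature G")
        case True then show ?thesis using s'P j by (auto simp: PiE_iff)
      next
        case False then have "j \<in> players G" using j unfolding agents_def by blast
        then show ?thesis using modify_backward[OF _ sj c] unfolding s'_def backward_L1_def by auto
      qed
    qed
    have "outcome G s' = outcome G s"
    proof (rule outcome_agree[OF vs vs'])
      fix k assume k: "k < length (outcome G s)"
      define zz where "zz = outcome G s"
      have zh: "zz \<in> hist G" using outcome_hist[OF vs] zz_def by simp
      define j where "j = turn G (take k zz)"
      show "s' (turn G (take k (outcome G s))) (infoset G (take k (outcome G s))) =
            s (turn G (take k (outcome G s))) (infoset G (take k (outcome G s)))"
      proof (cases "j \<in> players G")
        case False then show ?thesis unfolding s'_def j_def zz_def by simp
      next
        case True
        have sjs: "s j \<in> strategies G j" using sj[OF True] unfolding strong_L1_def by blast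
        have J: "infoset G (take k zz) \<in> infosets G j"
          using take_in_infoset(3)[OF zh] k zz_def j_def by simp
        define sm where "sm = s(j := undefined)"
        have smo: "sm \<in> others G j"
        proof -
          have "s \<in> (\<Pi>\<^sub>E j\<in>agents G. strategies G j)"
            using vs s(2) unfolding valid_def PiE_iff by auto
          moreover have "insert j (agents G - {j}) = agents G" using True players_agents by blast
          ultimately show ?thesis unfolding others_def sm_def
            by (intro fun_upd_in_PiE) auto
        qed
        have "sm(j := s j) = s" unfolding sm_def by simp
        then have "strat_reaches G j (s j) (infoset G (take k zz))"
          unfolding strat_reaches_def reaches_def using smo take_in_infoset(1)[OF zh] k zz_def
          by (metis take_is_prefix)
        then show ?thesis using J True unfolding s'_def modify_def j_def zz_def by simp
      qed
    qed
    then have "z = outcome G s'" using s(1) by simp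
    then show "z \<in> Zof G (backward_L1 G u b)" using s'P unfolding Zof_def by blast
  qed
qed

end

theorem proposition5:
  fixes G :: "('p, 'a) efg"
    and u :: "'p \<Rightarrow> 'a list \<Rightarrow> real"
    and b :: "'p \<Rightarrow> 'a list set \<Rightarrow> ('p, 'a) profile pmf"
  assumes "wf_game G"
    and "\<forall>i\<in>players G. belief_system G i (b i) \<and> full_support G i (b i)"
  shows "Zof G (strong_L1 G u b) = Zof G (backward_L1 G u b)"
proof -
  interpret game G u b using assms by unfold_locales
  show ?thesis by (rule main_eq)
qed

end
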